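(* Let $\{\mathscr E_1,\dots,\mathscr E_{\mathfrak n},\Delta\}$, $\mathfrak n\ge2$, be a partition of $E$ not depending on $N$, and $\alpha_N,\theta_N$ positive sequences with $\alpha_N/\theta_N\to0$, such that (H1) and (H2) hold with $(a_N,b_N)=(\alpha_N,\theta_N)$. Then for every $x$ such that $\mathscr E_x$ is not a singleton and all $\eta\neq\xi\in\mathscr E_x$, $$\lim_{N\to\infty}\frac{\mathrm{Cap}_N(\mathscr E_x,\breve{\mathscr E}_x)}{\mathrm{Cap}_N(\eta,\xi)}=0,\qquad \breve{\mathscr E}_x=\bigcup_{y\ne x}\mathscr E_y.$$
   Context: Setting: $E$ is a fixed finite set. For each $N\ge1$, $(\eta^N_t)_{t\ge0}$ is a continuous-time irreducible Markov chain on $E$ with jump rates $R_N(\eta,\xi)$, holding rates $\lambda_N(\eta)=\sum_{\xi\neq\eta}R_N(\eta,\xi)$ and unique invariant probability measure $\mu_N$; $\mathbb P_\eta$ denotes the law started at $\eta$. For $A\subset E$, $H_A=\inf\{t>0:\eta^N_t\in A\}$, $H^+_A=\inf\{t>\tau_1:\eta^N_t\in A\}$, $\tau_1$ the first jump time. For disjoint nonempty $A,B$, $\mathrm{Cap}_N(A,B)=\sum_{\eta\in A}\mu_N(\eta)\lambda_N(\eta)\mathbb P_\eta[H_B<H^+_A]$, $\mathrm{Cap}_N(\eta,\xi)=\mathrm{Cap}_N(\{\eta\},\{\xi\})$. For nonempty $F\subset E$ the trace on $F$ is $\eta^F_t=\eta^N_{S_F(t)}$, $S_F(t)=\sup\{s:\int_0^s\mathbf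 1\{\eta^N_r\in F\}dr\le t\}$, an irreducible Markov chain on $F$ with jump rates $R^F_N$. Conditions: with $\mathscr E=\bigcup_x\mathscr E_x$ and $r^{\mathscr E}_N(\mathscr E_x,\mathscr E_y)=\mu_N(\mathscr E_x)^{-1}\sum_{\eta\in\mathscr E_x}\mu_N(\eta)\sum_{\xi\in\mathscr E_y}R^{\mathscr E}_N(\eta,\xi)$, (H1) for all $x\neq y$, $r_{\mathscr E}(x,y):=\lim_N b_Nr^{\mathscr E}_N(\mathscr E_x,\mathscr E_y)$ exists in $[0,\infty)$ and $\sum_x\sum_{y\ne x}r_{\mathscr E}(x,y)>0$; (H2) for each $x$ with $|\mathscr E_x|\ge2$ and $\eta\ne\xi\in\mathscr E_x$, $\liminf_N a_N\mathrm{Cap}_N(\eta,\xi)/\mu_N(\mathscr E_x)>0$. *)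

theory Defs
  imports "HOL-Analysis.Analysis"
begin

text \<open>A continuous-time Markov chain on the finite type 'a is given by its jump rates
  R :: 'a => 'a => real (diagonal entries are ignored).\<close>

definition hold_rate :: "('a::finite \<Rightarrow> 'a \<Rightarrow> real) \<Rightarrow> 'a \<Rightarrow> real" where
  "hold_rate R \<eta> = (\<Sum>\<xi>\<in>UNIV - {\<eta>}. R \<eta> \<xi>)"

definition rates_ok :: "('a::finite \<Rightarrow> 'a \<Rightarrow> real) \<Rightarrow> bool" where
  "rates_ok R \<longleftrightarrow> (\<forall>\<eta> \<xi>. \<eta> \<noteq> \<xi> \<longrightarrow> 0 \<le> R \<eta> \<xi>)"

definition irreducible_rates :: "('a::finite \<Rightarrow> 'a \<Rightarrow> real) \<Rightarrow> bool" where
  "irreducible_rates R \<longleftrightarrow>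
     (\<forall>\<eta> \<xi>. (\<eta>, \<xi>) \<in> {(a, b). a \<noteq> b \<and> 0 < R a b}\<^sup>*)"

definition jump_prob :: "('a::finite \<Rightarrow> 'a \<Rightarrow> real) \<Rightarrow> 'a \<Rightarrow> 'a \<Rightarrow> real" where
  "jump_prob R \<eta> \<xi> = (if \<xi> = \<eta> then 0 else R \<eta> \<xi> / hold_rate R \<eta>)"

text \<open>hit_exact R A B k z: probability, starting from z, that the jump chain
  hits B for the first time at jump k and has not visited A \<union> B before.\<close>
fun hit_exact :: "('a::finite \<Rightarrow> 'a \<Rightarrow> real) \<Rightarrow> 'a set \<Rightarrow> 'a set \<Rightarrow> nat \<Rightarrow> 'a \<Rightarrow> real" where
  "hit_exact R A B 0 z = (if z \<in> B then 1 else 0)"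
| "hit_exact R A B (Suc k) z =
     (if z \<in> A \<union> B then 0 else (\<Sum>\<xi>\<in>UNIV. jump_prob R z \<xi> * hit_exact R A B k \<xi>))"

text \<open>P_z[H_B < H_A] (hitting times at times >= 0).\<close>
definition hit_before :: "('a::finite \<Rightarrow> 'a \<Rightarrow> real) \<Rightarrow> 'a set \<Rightarrow> 'a set \<Rightarrow> 'a \<Rightarrow> real" where
  "hit_before R A B z = (\<Sum>k. hit_exact R A B k z)"

text \<open>P_eta[H_B < H_A^+], where H_A^+ is the return time to A after the first jump.\<close>
definition escape_prob :: "('a::finite \<Rightarrow> 'a \<Rightarrow> real) \<Rightarrow> 'a set \<Rightarrow> 'a set \<Rightarrow> 'a \<Rightarrow> real" where
  "escape_prob R A B \<eta> = (\<Sum>\<xi>\<in>UNIV. jump_prob R \<eta> \<xi> * hit_before R A B \<xi>)"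

definition is_invariant :: "('a::finite \<Rightarrow> 'a \<Rightarrow> real) \<Rightarrow> ('a \<Rightarrow> real) \<Rightarrow> bool" where
  "is_invariant R \<mu> \<longleftrightarrow> (\<forall>\<eta>. 0 \<le> \<mu> \<eta>) \<and> sum \<mu> UNIV = 1 \<and>
     (\<forall>\<xi>. (\<Sum>\<eta>\<in>UNIV - {\<xi>}. \<mu> \<eta> * R \<eta> \<xi>) = \<mu> \<xi> * hold_rate R \<xi>)"

text \<open>The (unique, for irreducible chains) invariant probability measure.\<close>
definition inv_measure :: "('a::finite \<Rightarrow> 'a \<Rightarrow> real) \<Rightarrow> 'a \<Rightarrow> real" where
  "inv_measure R = (THE \<mu>. is_invariant R \<mu>)"

definition cap :: "('a::finite \<Rightarrow> 'a \<Rightarrow> real) \<Rightarrow> 'a set \<Rightarrow> 'a set \<Rightarrow> real" where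
  "cap R A B = (\<Sum>\<eta>\<in>A. inv_measure R \<eta> * hold_rate R \<eta> * escape_prob R A B \<eta>)"

text \<open>Jump rates of the trace process on F: R^F(eta,xi) = lambda(eta) P_eta[H^+_F = H^+_xi],
  eta \<noteq> xi in F.\<close>
definition trace_rate :: "('a::finite \<Rightarrow> 'a \<Rightarrow> real) \<Rightarrow> 'a set \<Rightarrow> 'a \<Rightarrow> 'a \<Rightarrow> real" where
  "trace_rate R F \<eta> \<xi> = hold_rate R \<eta> * escape_prob R (F - {\<xi>}) {\<xi>} \<eta>"

definition mean_trace_rate :: "('a::finite \<Rightarrow> 'a \<Rightarrow> real) \<Rightarrow> 'a set \<Rightarrow> 'a set \<Rightarrow> 'a set \<Rightarrow> real" where
  "mean_trace_rate R F Sx Sy =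
     (\<Sum>\<eta>\<in>Sx. inv_measure R \<eta> * (\<Sum>\<xi>\<in>Sy. trace_rate R F \<eta> \<xi>)) / (\<Sum>\<eta>\<in>Sx. inv_measure R \<eta>)"

end

theory Submission
  imports Defs
begin


lemma jp_nonneg: "rates_ok R \<Longrightarrow> 0 \<le> jump_prob R z \<xi>"
  unfolding jump_prob_def rates_ok_def hold_rate_def
  by (auto intro!: divide_nonneg_nonneg sum_nonneg) (metis DiffE singletonI)

lemma jp_sum_le1: "rates_ok R \<Longrightarrow> (\<Sum>\<xi>\<in>UNIV. jump_prob R z \<xi>) \<le> 1"
proof -
  have "(\<Sum>\<xi>\<in>UNIV. jump_prob R z \<xi>) = (\<Sum>\<xi>\<in>UNIV - {z}. jump_prob R z \<xi>)"
    by (rule sum.mono_neutral_right) (auto simp: jump_prob_def)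
  also have "\<dots> = (\<Sum>\<xi>\<in>UNIV - {z}. R z \<xi>) / hold_rate R z"
    by (simp add: jump_prob_def sum_divide_distrib)
  also have "\<dots> \<le> 1" by (simp add: hold_rate_def)
  finally show ?thesis .
qed

lemma he_nonneg: "rates_ok R \<Longrightarrow> 0 \<le> hit_exact R A B k z"
  by (induction k arbitrary: z) (auto intro!: sum_nonneg mult_nonneg_nonneg jp_nonneg)

lemma he_partial_le1: "rates_ok R \<Longrightarrow> (\<Sum>k<K. hit_exact R A B k z) \<le> 1"
proof (induction K arbitrary: z)
  case 0 then show ?case by simp
next
  case (Suc K)
  have eq: "(\<Sum>k<Suc K. hit_exact R A B k z) = hit_exact R A B 0 z + (\<Sum>k<K. hit_exact R A B (Suc k) z)"
    by (rule sum.lessThan_Suc_shift)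
  show ?case
  proof (cases "z \<in> A \<union> B")
    case True
    then show ?thesis unfolding eq by auto
  next
    case False
    have "(\<Sum>k<K. hit_exact R A B (Suc k) z) = (\<Sum>k<K. \<Sum>\<xi>\<in>UNIV. jump_prob R z \<xi> * hit_exact R A B k \<xi>)"
      using False by simp
    also have "\<dots> = (\<Sum>\<xi>\<in>UNIV. jump_prob R z \<xi> * (\<Sum>k<K. hit_exact R A B k \<xi>))"
      by (simp add: sum_distrib_left sum.swap[of _ "{..<K}"])
    also have "\<dots> \<le> (\<Sum>\<xi>\<in>UNIV. jump_prob R z \<xi> * 1)"
      by (rule sum_mono, rule mult_left_mono) (use Suc jp_nonneg in auto)
    also have "\<dots> \<le> 1" using jp_sum_le1[OF Suc.prems] by simp
    finally show ?thesis unfolding eq using False by simp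
  qed
qed

lemma he_summable: "rates_ok R \<Longrightarrow> summable (\<lambda>k. hit_exact R A B k z)"
  by (rule summableI_nonneg_bounded[where x=1]) (auto intro: he_nonneg he_partial_le1)

lemma he_split: "(\<Sum>\<xi>\<in>B. hit_exact R (A \<union> B - {\<xi>}) {\<xi>} k z) = hit_exact R A B k (z::'a::finite)"
proof (induction k arbitrary: z)
  case 0
  show ?case by (simp add: sum.delta)
next
  case (Suc k)
  have "(\<Sum>\<xi>\<in>B. hit_exact R (A \<union> B - {\<xi>}) {\<xi>} (Suc k) z) =
     (\<Sum>\<xi>\<in>B. if z \<in> A \<union> B then 0 else (\<Sum>\<zeta>\<in>UNIV. jump_prob R z \<zeta> * hit_exact R (A \<union> B - {\<xi>}) {\<xi>} k \<zeta>))"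
  proof (rule sum.cong)
    fix \<xi> assume "\<xi> \<in> B"
    then have "(z \<in> (A \<union> B - {\<xi>}) \<union> {\<xi>}) = (z \<in> A \<union> B)" by auto
    then show "hit_exact R (A \<union> B - {\<xi>}) {\<xi>} (Suc k) z = (if z \<in> A \<union> B then 0 else (\<Sum>\<zeta>\<in>UNIV. jump_prob R z \<zeta> * hit_exact R (A \<union> B - {\<xi>}) {\<xi>} k \<zeta>))"
      by (simp only: hit_exact.simps)
  qed simp
  also have "\<dots> = (if z \<in> A \<union> B then 0 else (\<Sum>\<zeta>\<in>UNIV. jump_prob R z \<zeta> * (\<Sum>\<xi>\<in>B. hit_exact R (A \<union> B - {\<xi>}) {\<xi>} k \<zeta>)))"
    by (simp add: sum_distrib_left sum.swap[of _ B])
  also have "\<dots> = hit_exact R A B (Suc k) z" by (simp add: Suc.IH)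
  finally show ?case .
qed

lemma hb_split: "rates_ok R \<Longrightarrow> (\<Sum>\<xi>\<in>B. hit_before R (A \<union> B - {\<xi>}) {\<xi>} z) = hit_before R A B (z::'a::finite)"
  unfolding hit_before_def
  by (subst suminf_sum[symmetric]) (auto intro: he_summable simp: he_split)

lemma tr_split: "rates_ok R \<Longrightarrow> (\<Sum>\<xi>\<in>B. trace_rate R (A \<union> B) \<eta> \<xi>) = hold_rate R \<eta> * escape_prob R A B (\<eta>::'a::finite)"
proof -
  assume r: "rates_ok R"
  have "(\<Sum>\<xi>\<in>B. trace_rate R (A \<union> B) \<eta> \<xi>) = hold_rate R \<eta> * (\<Sum>\<xi>\<in>B. \<Sum>\<zeta>\<in>UNIV. jump_prob R \<eta> \<zeta> * hit_before R (A \<union> B - {\<xi>}) {\<xi>} \<zeta>)"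
    unfolding trace_rate_def escape_prob_def by (simp add: sum_distrib_left)
  also have "(\<Sum>\<xi>\<in>B. \<Sum>\<zeta>\<in>UNIV. jump_prob R \<eta> \<zeta> * hit_before R (A \<union> B - {\<xi>}) {\<xi>} \<zeta>)
     = (\<Sum>\<zeta>\<in>UNIV. jump_prob R \<eta> \<zeta> * (\<Sum>\<xi>\<in>B. hit_before R (A \<union> B - {\<xi>}) {\<xi>} \<zeta>))"
    by (simp add: sum_distrib_left sum.swap[of _ B])
  also have "\<dots> = escape_prob R A B \<eta>" unfolding escape_prob_def using hb_split[OF r] by simp
  finally show ?thesis .
qed

lemma cap_split: "rates_ok R \<Longrightarrow> cap R A B = (\<Sum>\<eta>\<in>A. inv_measure R \<eta> * (\<Sum>\<xi>\<in>B. trace_rate R (A \<union> B) \<eta> \<xi>))"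
  unfolding cap_def by (simp add: tr_split mult.assoc)


theorem lemma6p2:
  fixes R :: "nat \<Rightarrow> 'a::finite \<Rightarrow> 'a \<Rightarrow> real"
    and n :: nat
    and Ecal :: "nat \<Rightarrow> 'a set"
    and Delta :: "'a set"
    and \<alpha> \<theta> :: "nat \<Rightarrow> real"
  assumes chain: "\<And>N. N \<ge> 1 \<Longrightarrow> rates_ok (R N) \<and> irreducible_rates (R N)"
    and n2: "n \<ge> 2"
    and parts_ne: "\<And>x. x \<in> {1..n} \<Longrightarrow> Ecal x \<noteq> {}"
    and parts_disj: "\<And>x y. x \<in> {1..n} \<Longrightarrow> y \<in> {1..n} \<Longrightarrow> x \<noteq> y \<Longrightarrow> Ecal x \<inter> Ecal y = {}"
    and delta_disj: "\<And>x. x \<in> {1..n} \<Longrightarrow> Ecal x \<inter> Delta = {}"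
    and cover: "(\<Union>x\<in>{1..n}. Ecal x) \<union> Delta = UNIV"
    and \<alpha>_pos: "\<And>N. N \<ge> 1 \<Longrightarrow> 0 < \<alpha> N"
    and \<theta>_pos: "\<And>N. N \<ge> 1 \<Longrightarrow> 0 < \<theta> N"
    and ratio: "(\<lambda>N. \<alpha> N / \<theta> N) \<longlonglongrightarrow> 0"
    and H1: "\<exists>r :: nat \<Rightarrow> nat \<Rightarrow> real.
              (\<forall>x\<in>{1..n}. \<forall>y\<in>{1..n}. x \<noteq> y \<longrightarrow>
                 (\<lambda>N. \<theta> N * mean_trace_rate (R N) (\<Union>z\<in>{1..n}. Ecal z) (Ecal x) (Ecal y))
                   \<longlonglongrightarrow> r x y)
              \<and> (\<Sum>x\<in>{1..n}. \<Sum>y\<in>{1..n} - {x}. r x y) > 0"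
    and H2: "\<And>x \<eta> \<xi>. x \<in> {1..n} \<Longrightarrow> card (Ecal x) \<ge> 2 \<Longrightarrow> \<eta> \<in> Ecal x \<Longrightarrow> \<xi> \<in> Ecal x \<Longrightarrow>
              \<eta> \<noteq> \<xi> \<Longrightarrow>
              Liminf sequentially (\<lambda>N. ereal (\<alpha> N * cap (R N) {\<eta>} {\<xi>}
                                         / (\<Sum>\<zeta>\<in>Ecal x. inv_measure (R N) \<zeta>))) > 0"
  shows "\<And>x \<eta> \<xi>. x \<in> {1..n} \<Longrightarrow> card (Ecal x) \<ge> 2 \<Longrightarrow> \<eta> \<in> Ecal x \<Longrightarrow> \<xi> \<in> Ecal x \<Longrightarrow>
           \<eta> \<noteq> \<xi> \<Longrightarrow>
           (\<lambda>N. cap (R N) (Ecal x) (\<Union>y\<in>{1..n} - {x}. Ecal y) / cap (R N) {\<eta>} {\<xi>})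
             \<longlonglongrightarrow> 0"
proof -
  fix x \<eta> \<xi>
  assume x: "x \<in> {1..n}" and c2: "card (Ecal x) \<ge> 2" and \<eta>: "\<eta> \<in> Ecal x" and \<xi>: "\<xi> \<in> Ecal x" and ne: "\<eta> \<noteq> \<xi>"
  obtain r :: "nat \<Rightarrow> nat \<Rightarrow> real" where rlim: "\<forall>x\<in>{1..n}. \<forall>y\<in>{1..n}. x \<noteq> y \<longrightarrow>
                 (\<lambda>N. \<theta> N * mean_trace_rate (R N) (\<Union>z\<in>{1..n}. Ecal z) (Ecal x) (Ecal y))
                   \<longlonglongrightarrow> r x y" using H1 by blast
  define A where "A = Ecal x"
  define B where "B = (\<Union>y\<in>{1..n} - {x}. Ecal y)"
  define F where "F = (\<Union>z\<in>{1..n}. Ecal z)"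
  define m where "m = (\<lambda>N. \<Sum>\<zeta>\<in>A. inv_measure (R N) \<zeta>)"
  define S where "S = (\<lambda>N y. \<Sum>\<eta>\<in>A. inv_measure (R N) \<eta> * (\<Sum>\<xi>\<in>Ecal y. trace_rate (R N) F \<eta> \<xi>))"
  have AB: "A \<union> B = F" unfolding A_def B_def F_def using x by auto
  have capeq: "cap (R N) A B = (\<Sum>y\<in>{1..n} - {x}. S N y)" if N: "N \<ge> 1" for N
  proof -
    have "cap (R N) A B = (\<Sum>\<eta>\<in>A. inv_measure (R N) \<eta> * (\<Sum>\<xi>\<in>B. trace_rate (R N) F \<eta> \<xi>))"
      using cap_split[of "R N" A B] chain[OF N] AB by simp
    also have "\<dots> = (\<Sum>\<eta>\<in>A. inv_measure (R N) \<eta> * (\<Sum>y\<in>{1..n} - {x}. \<Sum>\<xi>\<in>Ecal y. trace_rate (R N) F \<eta> \<xi>))"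
      unfolding B_def
      by (subst sum.UNION_disjoint) (use parts_disj in auto)
    also have "\<dots> = (\<Sum>y\<in>{1..n} - {x}. S N y)"
      unfolding S_def by (simp add: sum_distrib_left sum.swap[of _ A])
    finally show ?thesis .
  qed
  have "Liminf sequentially (\<lambda>N. ereal (\<alpha> N * cap (R N) {\<eta>} {\<xi>} / m N)) > 0"
    using H2[OF x c2 \<eta> \<xi> ne] unfolding m_def A_def by simp
  then obtain c where c0: "0 < ereal c" and cL: "ereal c < Liminf sequentially (\<lambda>N. ereal (\<alpha> N * cap (R N) {\<eta>} {\<xi>} / m N))"
    using ereal_dense2 by blast
  have cpos: "c > 0" using c0 by simp
  have ev: "eventually (\<lambda>N. N \<ge> 1 \<and> c < \<alpha> N * cap (R N) {\<eta>} {\<xi>} / m N) sequentially"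
    using eventually_conj[OF eventually_ge_at_top[of "1::nat"] less_LiminfD[OF cL]] by simp
  define g where "g = (\<lambda>N. \<theta> N * cap (R N) A B / m N)"
  have ev_g: "eventually (\<lambda>N. (\<Sum>y\<in>{1..n} - {x}. \<theta> N * mean_trace_rate (R N) F (Ecal x) (Ecal y)) = g N) sequentially"
    using ev
  proof (rule eventually_mono)
    fix N assume "N \<ge> 1 \<and> c < \<alpha> N * cap (R N) {\<eta>} {\<xi>} / m N"
    then have N: "N \<ge> 1" and mne: "m N \<noteq> 0" using cpos by auto
    have "g N = (\<Sum>y\<in>{1..n} - {x}. \<theta> N * S N y / m N)"
      unfolding g_def capeq[OF N] by (simp add: sum_distrib_left sum_divide_distrib)
    also have "\<dots> = (\<Sum>y\<in>{1..n} - {x}. \<theta> N * mean_trace_rate (R N) F (Ecal x) (Ecal y))"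
      unfolding mean_trace_rate_def S_def m_def A_def by simp
    finally show "(\<Sum>y\<in>{1..n} - {x}. \<theta> N * mean_trace_rate (R N) F (Ecal x) (Ecal y)) = g N" by simp
  qed
  have glim: "g \<longlonglongrightarrow> (\<Sum>y\<in>{1..n} - {x}. r x y)"
  proof (rule Lim_transform_eventually[OF _ ev_g])
    show "(\<lambda>N. \<Sum>y\<in>{1..n} - {x}. \<theta> N * mean_trace_rate (R N) F (Ecal x) (Ecal y)) \<longlonglongrightarrow> (\<Sum>y\<in>{1..n} - {x}. r x y)"
      by (rule tendsto_sum) (use rlim x in \<open>auto simp: F_def\<close>)
  qed
  have blim: "(\<lambda>N. \<bar>g N * (\<alpha> N / \<theta> N)\<bar> / c) \<longlonglongrightarrow> 0"
    using tendsto_divide[OF tendsto_rabs[OF tendsto_mult[OF glim ratio]] tendsto_const[of c]] cpos by simp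
  show "(\<lambda>N. cap (R N) (Ecal x) (\<Union>y\<in>{1..n} - {x}. Ecal y) / cap (R N) {\<eta>} {\<xi>}) \<longlonglongrightarrow> 0"
    unfolding A_def[symmetric] B_def[symmetric]
  proof (rule Lim_null_comparison[OF _ blim])
    show "eventually (\<lambda>N. norm (cap (R N) A B / cap (R N) {\<eta>} {\<xi>}) \<le> \<bar>g N * (\<alpha> N / \<theta> N)\<bar> / c) sequentially"
      using ev
    proof (rule eventually_mono)
      fix N assume h: "N \<ge> 1 \<and> c < \<alpha> N * cap (R N) {\<eta>} {\<xi>} / m N"
      define q where "q = \<alpha> N * cap (R N) {\<eta>} {\<xi>} / m N"
      have N: "N \<ge> 1" and cq: "c < q" using h q_def by auto
      have mne: "m N \<noteq> 0" and cne: "cap (R N) {\<eta>} {\<xi>} \<noteq> 0" using cq cpos q_def by auto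
      have a: "\<alpha> N > 0" and t: "\<theta> N > 0" using \<alpha>_pos[OF N] \<theta>_pos[OF N] by auto
      have eq: "cap (R N) A B / cap (R N) {\<eta>} {\<xi>} = g N * (\<alpha> N / \<theta> N) / q"
        unfolding g_def q_def using mne cne a t by (simp add: field_simps)
      have "norm (g N * (\<alpha> N / \<theta> N) / q) = \<bar>g N * (\<alpha> N / \<theta> N)\<bar> / \<bar>q\<bar>"
        by (simp only: real_norm_def abs_divide)
      also have "\<dots> \<le> \<bar>g N * (\<alpha> N / \<theta> N)\<bar> / c"
        by (rule divide_left_mono) (use cq cpos in auto)
      finally show "norm (cap (R N) A B / cap (R N) {\<eta>} {\<xi>}) \<le> \<bar>g N * (\<alpha> N / \<theta> N)\<bar> / c"
        unfolding eq .
    qed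
  qed
qed

end
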